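(* Let $W:\mathcal{X}\to\mathcal{Y}$ be a channel such that $W(\mathcal{X})=\{W_x:x\in\mathcal{X}\}\subset\mathcal{P}(\mathcal{Y})$ contains a continuous curve, i.e. there are inputs $x_t$, $t\in[0,1]$, such that $t\mapsto W_{x_t}$ is continuous with respect to the total variation distance and $W_{x_0}\neq W_{x_1}$. Then $\dot{C}_{\mathrm{DI}}(W)\ge\frac14$.
   Context: Here $\mathcal{X}$ and $\mathcal{Y}$ are measurable spaces (no finiteness assumption on $\mathcal{Y}$), and a channel is a measurable map $x\mapsto W_x$ into the probability measures $\mathcal{P}(\mathcal{Y})$ on $\mathcal{Y}$; the total variation distance is $\sup_{\mathcal{A}}|P(\mathcal{A})-Q(\mathcal{A})|$ over measurable $\mathcal{A}$. $W_{x^n}$ is the product measure $W_{x_1}\otimes\cdots\otimes W_{x_n}$ on $\mathcal{Y}^n$. An $(n,N,\lambda_1,\lambda_2)$-DI code is a family $\{(u_j,\mathcal{E}_j):j\in[N]\}$, $u_j\in\mathcal{X}^n$, $\mathcal{E}_j\subset\mathcal{Y}^n$ measurable, with $W_{u_j}(\mathcal{E}_j)\ge1-\lambda_1$ for all $j$ and $W_{u_j}(\mathcal{E}_k)\le\lambda_2$ for $j\ne k$; $N_{\mathrm{DI}}(n,\lambda_1,\lambda_2)$ is the largest such $N$. Logarithms base 2; $\dot{C}_{\mathrm{DI}}(W)=\inf_{\lambda_1,\lambda_2>0}\liminf_{n\to\infty}\frac{1}{n\log n}\log N_{\mathrm{DI}}(n,\lambda_1,\lambda_2)$. *)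

theory Defs
  imports "HOL-Probability.Probability"
begin

definition channel :: "'a measure \<Rightarrow> 'b measure \<Rightarrow> ('a \<Rightarrow> 'b measure) \<Rightarrow> bool" where
  "channel MX MY W \<longleftrightarrow> W \<in> measurable MX (prob_algebra MY)"

definition tv_dist :: "'b measure \<Rightarrow> 'b measure \<Rightarrow> 'b measure \<Rightarrow> real" where
  "tv_dist MY P Q = (SUP A \<in> sets MY. \<bar>measure P A - measure Q A\<bar>)"

text \<open>Product output distribution W_{x^n} on Y^n, for a codeword u in X^n
(u given as an extensional function on {..<n}).\<close>
definition prod_out :: "('a \<Rightarrow> 'b measure) \<Rightarrow> nat \<Rightarrow> (nat \<Rightarrow> 'a) \<Rightarrow> (nat \<Rightarrow> 'b) measure" where
  "prod_out W n u = PiM {..<n} (\<lambda>i. W (u i))"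

definition DI_code :: "'a measure \<Rightarrow> 'b measure \<Rightarrow> ('a \<Rightarrow> 'b measure) \<Rightarrow> nat \<Rightarrow> nat
    \<Rightarrow> real \<Rightarrow> real \<Rightarrow> (nat \<Rightarrow> nat \<Rightarrow> 'a) \<Rightarrow> (nat \<Rightarrow> (nat \<Rightarrow> 'b) set) \<Rightarrow> bool" where
  "DI_code MX MY W n N l1 l2 u E \<longleftrightarrow>
     (\<forall>j<N. u j \<in> {..<n} \<rightarrow>\<^sub>E space MX \<and> E j \<in> sets (PiM {..<n} (\<lambda>_. MY))) \<and>
     (\<forall>j<N. measure (prod_out W n (u j)) (E j) \<ge> 1 - l1) \<and>
     (\<forall>j<N. \<forall>k<N. j \<noteq> k \<longrightarrow> measure (prod_out W n (u j)) (E k) \<le> l2)"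

definition N_DI :: "'a measure \<Rightarrow> 'b measure \<Rightarrow> ('a \<Rightarrow> 'b measure) \<Rightarrow> nat \<Rightarrow> real \<Rightarrow> real \<Rightarrow> enat" where
  "N_DI MX MY W n l1 l2 = Sup {enat N | N. \<exists>u E. DI_code MX MY W n N l1 l2 u E}"

definition DI_rate :: "'a measure \<Rightarrow> 'b measure \<Rightarrow> ('a \<Rightarrow> 'b measure) \<Rightarrow> nat \<Rightarrow> real \<Rightarrow> real \<Rightarrow> ereal" where
  "DI_rate MX MY W n l1 l2 =
     (case N_DI MX MY W n l1 l2 of
        enat N \<Rightarrow> ereal (log 2 (real N) / (real n * log 2 (real n)))
      | \<infinity> \<Rightarrow> \<infinity>)"

definition C_DI_dot :: "'a measure \<Rightarrow> 'b measure \<Rightarrow> ('a \<Rightarrow> 'b measure) \<Rightarrow> ereal" where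
  "C_DI_dot MX MY W =
     (INF l \<in> {(l1, l2). l1 > 0 \<and> l2 > 0}. liminf (\<lambda>n. DI_rate MX MY W n (fst l) (snd l)))"

end

theory Submission
  imports Defs "HOL-Real_Asymp.Real_Asymp"
begin


lemma indep_coords:
  assumes "finite I" "I \<noteq> {}" "\<And>i. i\<in>I \<Longrightarrow> prob_space (M i)"
  shows "prob_space.indep_vars (PiM I M) M (\<lambda>i \<omega>. \<omega> i) I"
proof -
  interpret P: prob_space "PiM I M" by (rule prob_space_PiM) (use assms in auto)
  have "P.indep_vars M (\<lambda>i \<omega>. \<omega> i) I \<longleftrightarrow> distr (PiM I M) (PiM I M) (\<lambda>x. restrict x I) = PiM I (\<lambda>i. distr (PiM I M) (M i) (\<lambda>\<omega>. \<omega> i))"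
    by (rule P.indep_vars_iff_distr_eq_PiM') (use assms in auto)
  moreover have "PiM I (\<lambda>i. distr (PiM I M) (M i) (\<lambda>\<omega>. \<omega> i)) = PiM I M"
    by (rule PiM_cong) (auto intro: distr_PiM_component assms)
  moreover have "distr (PiM I M) (PiM I M) (\<lambda>x. restrict x I) = distr (PiM I M) (PiM I M) (\<lambda>x. x)"
    by (rule distr_cong) (auto simp: space_PiM PiE_def extensional_restrict)
  ultimately show ?thesis by simp
qed



lemma hoeff_prod:
  fixes P :: "nat \<Rightarrow> 'b measure" and g r :: "nat \<Rightarrow> real"
  assumes n: "n > 0" and ps: "\<And>i. i < n \<Longrightarrow> prob_space (P i)"
    and sP: "\<And>i. i < n \<Longrightarrow> sets (P i) = sets MY"
    and A: "A \<in> sets MY" and g: "\<And>i. i < n \<Longrightarrow> \<bar>g i\<bar> \<le> 1"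
    and r: "\<And>i. i < n \<Longrightarrow> r i \<in> {0..1}" and t: "t \<ge> 0"
  shows "measure (PiM {..<n} P) {\<omega>\<in>space (PiM {..<n} P).
            (\<Sum>i<n. g i * (indicator A (\<omega> i) - r i)) \<ge> (\<Sum>i<n. g i * (measure (P i) A - r i)) + t}
          \<le> exp (-2*t\<^sup>2/(4*real n))"
    and "measure (PiM {..<n} P) {\<omega>\<in>space (PiM {..<n} P).
            (\<Sum>i<n. g i * (indicator A (\<omega> i) - r i)) \<le> (\<Sum>i<n. g i * (measure (P i) A - r i)) - t}
          \<le> exp (-2*t\<^sup>2/(4*real n))"
proof -
  define Q where "Q = PiM {..<n} P"
  interpret Q: prob_space Q unfolding Q_def by (rule prob_space_PiM) (use ps in auto)
  define X where "X = (\<lambda>i \<omega>. g i * (indicator A (\<omega> i) - r i) :: real)"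
  have AP: "A \<in> sets (P i)" if "i < n" for i using sP[OF that] A by simp
  have ind0: "Q.indep_vars P (\<lambda>i \<omega>. \<omega> i) {..<n}"
    unfolding Q_def by (rule indep_coords) (use n ps in auto)
  have ind: "Q.indep_vars (\<lambda>_. borel) X {..<n}"
    unfolding X_def
    by (rule Q.indep_vars_compose2[OF ind0, where Y="\<lambda>i y. g i * (indicator A y - r i)"])
       (use AP in auto)
  have bnd: "X i \<omega> \<in> {-1..1}" if "i < n" for i \<omega>
  proof -
    have "\<bar>indicator A (\<omega> i) - r i\<bar> \<le> (1::real)" using r[OF that]
      by (auto simp: indicator_def)
    then have "\<bar>X i \<omega>\<bar> \<le> 1" unfolding X_def using g[OF that]
      by (simp add: abs_mult mult_le_one)
    then show ?thesis by auto
  qed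
  interpret H: Hoeffding_ineq Q "{..<n}" X "\<lambda>_. -1" "\<lambda>_. 1" "\<Sum>i\<in>{..<n}. Q.expectation (X i)"
    by unfold_locales (use ind bnd in auto)
  have ex: "Q.expectation (X i) = g i * (measure (P i) A - r i)" if "i < n" for i
  proof -
    interpret Pi: prob_space "P i" using ps[OF that] .
    have "Q.expectation (X i) = integral\<^sup>L (distr Q (P i) (\<lambda>\<omega>. \<omega> i)) (\<lambda>y. g i * (indicator A y - r i))"
      unfolding X_def
      by (subst integral_distr) (use AP[OF that] that in \<open>auto simp: Q_def\<close>)
    also have "distr Q (P i) (\<lambda>\<omega>. \<omega> i) = P i"
      unfolding Q_def by (rule distr_PiM_component) (use ps that in auto)
    also have "integral\<^sup>L (P i) (\<lambda>y. g i * (indicator A y - r i)) = g i * (measure (P i) A - r i)"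
      proof -
        have "integral\<^sup>L (P i) (\<lambda>y. indicator A y - r i) = measure (P i) A - r i"
          using AP[OF that] by (subst Bochner_Integration.integral_diff) (auto simp: Pi.prob_space Pi.emeasure_eq_measure)
        then show ?thesis by simp
      qed
    finally show ?thesis .
  qed
  have mu: "(\<Sum>i\<in>{..<n}. Q.expectation (X i)) = (\<Sum>i<n. g i * (measure (P i) A - r i))"
    by (rule sum.cong) (auto simp: ex)
  have d: "(\<Sum>i\<in>{..<n}. ((1::real) - -1)\<^sup>2) = 4 * real n" by simp
  show "measure (PiM {..<n} P) {\<omega>\<in>space (PiM {..<n} P).
            (\<Sum>i<n. g i * (indicator A (\<omega> i) - r i)) \<ge> (\<Sum>i<n. g i * (measure (P i) A - r i)) + t}
          \<le> exp (-2*t\<^sup>2/(4*real n))"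
    using H.Hoeffding_ineq_ge[OF t] n unfolding mu d by (simp add: X_def Q_def)
  show "measure (PiM {..<n} P) {\<omega>\<in>space (PiM {..<n} P).
            (\<Sum>i<n. g i * (indicator A (\<omega> i) - r i)) \<le> (\<Sum>i<n. g i * (measure (P i) A - r i)) - t}
          \<le> exp (-2*t\<^sup>2/(4*real n))"
    using H.Hoeffding_ineq_le[OF t] n unfolding mu d by (simp add: X_def Q_def)
qed



lemma greedy:
  fixes X :: "'a set" and cl :: "'a \<Rightarrow> 'a \<Rightarrow> bool"
  assumes "finite X" "\<And>x y. cl x y \<Longrightarrow> cl y x" "\<And>x. x\<in>X \<Longrightarrow> card {y\<in>X. cl x y} \<le> B"
    "\<And>x. cl x x"
  shows "\<exists>S\<subseteq>X. card X \<le> B * card S \<and> (\<forall>x\<in>S. \<forall>y\<in>S. x \<noteq> y \<longrightarrow> \<not> cl x y)"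
  using assms(1,3)
proof (induction "card X" arbitrary: X rule: less_induct)
  case less
  show ?case
  proof (cases "X = {}")
    case True then show ?thesis by auto
  next
    case False
    then obtain x where x: "x \<in> X" by auto
    define X' where "X' = X - {y\<in>X. cl x y}"
    have fX': "finite X'" using less.prems unfolding X'_def by auto
    have sub: "X' \<subset> X" unfolding X'_def using x assms(4) by auto
    have lt: "card X' < card X" using sub less.prems(1) by (simp add: psubset_card_mono)
    have bd: "\<And>z. z \<in> X' \<Longrightarrow> card {y\<in>X'. cl z y} \<le> B"
    proof -
      fix z assume "z \<in> X'"
      then have "card {y\<in>X'. cl z y} \<le> card {y\<in>X. cl z y}"
        by (intro card_mono) (use less.prems sub in auto)
      also have "\<dots> \<le> B" using less.prems(2) \<open>z \<in> X'\<close> sub by auto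
      finally show "card {y\<in>X'. cl z y} \<le> B" .
    qed
    obtain S' where S': "S' \<subseteq> X'" "card X' \<le> B * card S'"
        "\<forall>u\<in>S'. \<forall>v\<in>S'. u \<noteq> v \<longrightarrow> \<not> cl u v"
      using less.hyps[OF lt fX' bd] by blast
    have xS': "x \<notin> S'" using S'(1) assms(4) unfolding X'_def by auto
    have fS': "finite S'" using S'(1) fX' finite_subset by blast
    have "card X \<le> card X' + card {y\<in>X. cl x y}"
    proof -
      have "X \<subseteq> X' \<union> {y\<in>X. cl x y}" unfolding X'_def by auto
      then have "card X \<le> card (X' \<union> {y\<in>X. cl x y})"
        by (intro card_mono) (use less.prems fX' in auto)
      also have "\<dots> \<le> card X' + card {y\<in>X. cl x y}" by (rule card_Un_le)
      finally show ?thesis .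
    qed
    also have "\<dots> \<le> B * card S' + B" using S'(2) less.prems(2)[OF x] by simp
    also have "\<dots> = B * card (insert x S')" using xS' fS' by simp
    finally have c: "card X \<le> B * card (insert x S')" .
    have "\<forall>u\<in>insert x S'. \<forall>v\<in>insert x S'. u \<noteq> v \<longrightarrow> \<not> cl u v"
      using S' assms(2) unfolding X'_def by blast
    moreover have "insert x S' \<subseteq> X" using S'(1) x unfolding X'_def by auto
    ultimately show ?thesis using c by blast
  qed
qed

lemma pigeon:
  assumes "finite X" "f ` X \<subseteq> K" "finite K" "K \<noteq> {}"
  shows "\<exists>k. card X \<le> card K * card {x\<in>X. f x = k}"
proof -
  define h where "h k = card {x\<in>X. f x = k}" for k
  have "Max (h ` K) \<in> h ` K" using assms by (intro Max_in) auto
  then obtain k where k: "k \<in> K" "h k = Max (h ` K)" by auto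
  have XU: "X = (\<Union>b\<in>K. {x\<in>X. f x = b})" using assms(2) by auto
  have "card X \<le> (\<Sum>b\<in>K. h b)" unfolding h_def
    by (subst XU, rule card_UN_le) (use assms in auto)
  also have "\<dots> \<le> (\<Sum>b\<in>K. h k)"
    by (intro sum_mono) (use k assms in auto)
  also have "\<dots> = card K * h k" by simp
  finally show ?thesis unfolding h_def by blast
qed

lemma choose_le_pow: "(n choose k) \<le> n ^ k"
  by (cases "k \<le> n") (auto simp: binomial_le_pow binomial_eq_0)

lemma card_small_subsets:
  assumes "n \<ge> 1"
  shows "card {D. D \<subseteq> {..<n} \<and> card D < R} \<le> R * n ^ R"
proof -
  have eq: "{D. D \<subseteq> {..<n} \<and> card D < R} = (\<Union>k<R. {D. D \<subseteq> {..<n} \<and> card D = k})" by auto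
  have "card (\<Union>k<R. {D. D \<subseteq> {..<n} \<and> card D = k}) \<le> (\<Sum>k<R. card {D. D \<subseteq> {..<n} \<and> card D = k})"
    by (rule card_UN_le) auto
  also have "\<dots> = (\<Sum>k<R. n choose k)" by (simp add: n_subsets)
  also have "\<dots> \<le> (\<Sum>k<R. n ^ R)"
  proof (intro sum_mono)
    fix k assume "k \<in> {..<R}"
    then have "n ^ k \<le> n ^ R" using assms by (intro power_increasing) auto
    then show "n choose k \<le> n ^ R" using choose_le_pow[of n k] by linarith
  qed
  also have "\<dots> = R * n ^ R" by simp
  finally show ?thesis unfolding eq .
qed

lemma ball_card:
  assumes c: "c \<in> {..<n} \<rightarrow>\<^sub>E {..<M}" and n: "n \<ge> 1" and M: "M \<ge> 1"
  shows "card {c'\<in>{..<n} \<rightarrow>\<^sub>E {..<M}. card {i\<in>{..<n}. c' i \<noteq> c i} < R} \<le> R * n ^ R * M ^ R"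
proof -
  define Ds where "Ds = {D. D \<subseteq> {..<n} \<and> card D < R}"
  define F where "F D = (\<lambda>g. \<lambda>i. if i \<in> D then g i else c i) ` (D \<rightarrow>\<^sub>E {..<M})" for D
  have fDs: "finite Ds" unfolding Ds_def by auto
  have sub: "{c'\<in>{..<n} \<rightarrow>\<^sub>E {..<M}. card {i\<in>{..<n}. c' i \<noteq> c i} < R} \<subseteq> (\<Union>D\<in>Ds. F D)"
  proof
    fix c' assume c': "c' \<in> {c'\<in>{..<n} \<rightarrow>\<^sub>E {..<M}. card {i\<in>{..<n}. c' i \<noteq> c i} < R}"
    define D where "D = {i\<in>{..<n}. c' i \<noteq> c i}"
    have "D \<in> Ds" using c' unfolding D_def Ds_def by auto
    moreover have "c' = (\<lambda>i. if i \<in> D then restrict c' D i else c i)"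
    proof
      fix i show "c' i = (if i \<in> D then restrict c' D i else c i)"
        using c' c unfolding D_def by (cases "i < n") (auto simp: PiE_def extensional_def)
    qed
    moreover have "restrict c' D \<in> D \<rightarrow>\<^sub>E {..<M}" using c' unfolding D_def by auto
    ultimately show "c' \<in> (\<Union>D\<in>Ds. F D)" unfolding F_def by blast
  qed
  have "card {c'\<in>{..<n} \<rightarrow>\<^sub>E {..<M}. card {i\<in>{..<n}. c' i \<noteq> c i} < R} \<le> card (\<Union>D\<in>Ds. F D)"
    by (rule card_mono[OF _ sub]) (use fDs in \<open>auto simp: F_def Ds_def intro!: finite_imageI finite_PiE dest: finite_subset\<close>)
  also have "\<dots> \<le> (\<Sum>D\<in>Ds. card (F D))" by (rule card_UN_le[OF fDs])
  also have "\<dots> \<le> (\<Sum>D\<in>Ds. M ^ R)"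
  proof (intro sum_mono)
    fix D assume D: "D \<in> Ds"
    then have fD: "finite D" unfolding Ds_def using finite_subset by blast
    have "card (F D) \<le> card (D \<rightarrow>\<^sub>E {..<M})" unfolding F_def by (rule card_image_le) (use fD in \<open>auto intro!: finite_PiE\<close>)
    also have "\<dots> = M ^ card D" using fD by (simp add: card_PiE)
    also have "\<dots> \<le> M ^ R" using D M unfolding Ds_def by (intro power_increasing) auto
    finally show "card (F D) \<le> M ^ R" .
  qed
  also have "\<dots> = card Ds * M ^ R" by simp
  also have "\<dots> \<le> R * n ^ R * M ^ R" using card_small_subsets[OF n, of R] unfolding Ds_def by simp
  finally show ?thesis .
qed



lemma code_exists:
  fixes n M R :: nat
  assumes n: "n \<ge> 1" and M: "M \<ge> 1" and R: "R \<ge> 1"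
  shows "\<exists>C \<subseteq> {..<n} \<rightarrow>\<^sub>E {..<M}.
     M ^ n \<le> ((n*M+1)*(n*M*M+1)) * (R*n^R*M^R) * card C \<and>
     (\<forall>c\<in>C. \<forall>c'\<in>C. c \<noteq> c' \<longrightarrow> R \<le> card {i\<in>{..<n}. c i \<noteq> c' i}) \<and>
     (\<forall>c\<in>C. \<forall>c'\<in>C. (\<Sum>i<n. c i) = (\<Sum>i<n. c' i) \<and> (\<Sum>i<n. c i ^ 2) = (\<Sum>i<n. c' i ^ 2))"
proof -
  define Wd where "Wd = {..<n} \<rightarrow>\<^sub>E {..<M}"
  define key where "key c = ((\<Sum>i<n. c i), (\<Sum>i<n. c i ^ 2))" for c :: "nat \<Rightarrow> nat"
  define K where "K = {..n*M} \<times> {..n*M*M}"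
  define B where "B = R*n^R*M^R"
  have fW: "finite Wd" unfolding Wd_def by (auto intro!: finite_PiE)
  have cW: "card Wd = M ^ n" unfolding Wd_def by (simp add: card_PiE)
  have kK: "key ` Wd \<subseteq> K"
  proof
    fix z assume "z \<in> key ` Wd"
    then obtain c where c: "c \<in> Wd" "z = key c" by auto
    have "(\<Sum>i<n. c i) \<le> (\<Sum>i<n. M)" using c(1) unfolding Wd_def
      by (intro sum_mono) (auto simp: PiE_def Pi_def less_imp_le)
    moreover have "(\<Sum>i<n. c i ^ 2) \<le> (\<Sum>i<n. M * M)"
    proof (intro sum_mono)
      fix i assume "i \<in> {..<n}"
      then have "c i \<le> M" using c(1) unfolding Wd_def by (auto simp: PiE_def Pi_def less_imp_le)
      then show "c i ^ 2 \<le> M * M" by (simp add: power2_eq_square mult_le_mono)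
    qed
    ultimately show "z \<in> K" using c(2) unfolding key_def K_def by (auto simp: mult.commute mult.left_commute)
  qed
  have cK: "card K = (n*M+1)*(n*M*M+1)" unfolding K_def by (simp add: card_cartesian_product)
  obtain k where k: "card Wd \<le> card K * card {x\<in>Wd. key x = k}"
    using pigeon[OF fW kK] unfolding K_def by auto
  define T where "T = {x\<in>Wd. key x = k}"
  define cl where "cl c c' = (card {i\<in>{..<n}. c' i \<noteq> c i} < R)" for c c' :: "nat \<Rightarrow> nat"
  have fT: "finite T" using fW unfolding T_def by auto
  have sym: "cl y x" if "cl x y" for x y
  proof -
    have "{i\<in>{..<n}. x i \<noteq> y i} = {i\<in>{..<n}. y i \<noteq> x i}" by auto
    then show ?thesis using that unfolding cl_def by simp
  qed
  have refl: "cl x x" for x unfolding cl_def using R by simp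
  have deg: "card {y\<in>T. cl x y} \<le> B" if "x \<in> T" for x
  proof -
    have "card {y\<in>T. cl x y} \<le> card {c'\<in>{..<n} \<rightarrow>\<^sub>E {..<M}. card {i\<in>{..<n}. c' i \<noteq> x i} < R}"
      by (rule card_mono) (auto simp: T_def Wd_def cl_def intro!: finite_PiE)
    also have "\<dots> \<le> B" unfolding B_def
      by (rule ball_card) (use that n M in \<open>auto simp: T_def Wd_def\<close>)
    finally show ?thesis .
  qed
  obtain S where S: "S \<subseteq> T" "card T \<le> B * card S" "\<forall>x\<in>S. \<forall>y\<in>S. x \<noteq> y \<longrightarrow> \<not> cl x y"
    using greedy[of T cl B, OF fT sym deg refl] by blast
  have "M ^ n \<le> card K * card T" using k cW unfolding T_def by simp
  also have "\<dots> \<le> card K * (B * card S)" using S(2) by simp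
  finally have c1: "M ^ n \<le> ((n*M+1)*(n*M*M+1)) * (R*n^R*M^R) * card S"
    unfolding cK B_def by (simp only: mult.assoc)
  have c2: "\<forall>c\<in>S. \<forall>c'\<in>S. c \<noteq> c' \<longrightarrow> R \<le> card {i\<in>{..<n}. c i \<noteq> c' i}"
    using S(3) unfolding cl_def by (metis not_less)
  have c3: "\<forall>c\<in>S. \<forall>c'\<in>S. (\<Sum>i<n. c i) = (\<Sum>i<n. c' i) \<and> (\<Sum>i<n. c i ^ 2) = (\<Sum>i<n. c' i ^ 2)"
    using S(1) unfolding T_def key_def by auto
  have "S \<subseteq> {..<n} \<rightarrow>\<^sub>E {..<M}" using S(1) unfolding T_def Wd_def by auto
  then show ?thesis using c1 c2 c3 by blast
qed



lemma code_bounds: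
  fixes W :: "'a \<Rightarrow> 'b measure" and \<xi> :: "real \<Rightarrow> 'a" and c c' :: "nat \<Rightarrow> nat"
  assumes ch: "channel MX MY W"
    and xi: "\<And>p. p \<in> {a..b} \<Longrightarrow> \<xi> p \<in> space MX \<and> measure (W (\<xi> p)) A = p"
    and A: "A \<in> sets MY" and ab: "0 \<le> a" "a < b" "b \<le> 1" and n: "n \<ge> 1" and M: "M \<ge> 1"
    and c: "c \<in> {..<n} \<rightarrow>\<^sub>E {..<M}" and c': "c' \<in> {..<n} \<rightarrow>\<^sub>E {..<M}"
    and th: "\<theta> \<ge> 0"
  defines "q \<equiv> \<lambda>c i. a + (b-a)/M * real (c i)"
  defines "T \<equiv> \<lambda>c \<omega>. (\<Sum>i<n. (1 - 2*q c i) * (indicator A (\<omega> i) - q c i))"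
  shows "measure (PiM {..<n} (\<lambda>i. W (\<xi> (q c i)))) {\<omega>\<in>space (PiM {..<n} (\<lambda>_. MY)). T c \<omega> < \<theta>}
           \<ge> 1 - exp (-2*\<theta>\<^sup>2/(4*real n))"
    and "c \<noteq> c' \<Longrightarrow> R \<le> card {i\<in>{..<n}. c i \<noteq> c' i} \<Longrightarrow> (\<Sum>i<n. c i) = (\<Sum>i<n. c' i) \<Longrightarrow>
         (\<Sum>i<n. c i ^ 2) = (\<Sum>i<n. c' i ^ 2) \<Longrightarrow> 2*\<theta> \<le> R*((b-a)/M)\<^sup>2 \<Longrightarrow>
         measure (PiM {..<n} (\<lambda>i. W (\<xi> (q c' i)))) {\<omega>\<in>space (PiM {..<n} (\<lambda>_. MY)). T c \<omega> < \<theta>}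
           \<le> exp (-2*\<theta>\<^sup>2/(4*real n))"
proof -
  have qin: "q d i \<in> {a..b}" if "d \<in> {..<n} \<rightarrow>\<^sub>E {..<M}" "i < n" for d i
  proof -
    have "d i < M" using that by auto
    then have "real (d i) \<le> real M" by simp
    then have "(b-a)/M * real (d i) \<le> (b-a)/M * real M" using ab by (intro mult_left_mono) auto
    also have "\<dots> = b - a" using M by simp
    finally show ?thesis unfolding q_def using ab by auto
  qed
  have Wps: "prob_space (W z) \<and> sets (W z) = sets MY" if "z \<in> space MX" for z
    using measurable_space[OF ch[unfolded channel_def] that] by (auto simp: space_prob_algebra)
  have Pprop: "prob_space (W (\<xi> (q d i))) \<and> sets (W (\<xi> (q d i))) = sets MY \<and> measure (W (\<xi> (q d i))) A = q d i"
    if "d \<in> {..<n} \<rightarrow>\<^sub>E {..<M}" "i < n" for d i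
    using Wps xi qin[OF that] by blast
  have sets_eq: "sets (PiM {..<n} (\<lambda>i. W (\<xi> (q d i)))) = sets (PiM {..<n} (\<lambda>_. MY))"
    if "d \<in> {..<n} \<rightarrow>\<^sub>E {..<M}" for d
    by (rule sets_PiM_cong) (use Pprop[OF that] in auto)
  have space_eq: "space (PiM {..<n} (\<lambda>i. W (\<xi> (q d i)))) = space (PiM {..<n} (\<lambda>_. MY))"
    if "d \<in> {..<n} \<rightarrow>\<^sub>E {..<M}" for d
    using sets_eq_imp_space_eq[OF sets_eq[OF that]] .
  have Tm: "T d \<in> borel_measurable (PiM {..<n} (\<lambda>_. MY))" for d
    unfolding T_def using A by measurable
  have Em: "{\<omega>\<in>space (PiM {..<n} (\<lambda>_. MY)). T d \<omega> < t} \<in> sets (PiM {..<n} (\<lambda>_. MY))"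
     "{\<omega>\<in>space (PiM {..<n} (\<lambda>_. MY)). T d \<omega> \<ge> t} \<in> sets (PiM {..<n} (\<lambda>_. MY))"
     "{\<omega>\<in>space (PiM {..<n} (\<lambda>_. MY)). T d \<omega> \<le> t} \<in> sets (PiM {..<n} (\<lambda>_. MY))"
     for d t
  proof -
    have e1: "{\<omega>\<in>space (PiM {..<n} (\<lambda>_. MY)). T d \<omega> < t} = T d -` {..<t} \<inter> space (PiM {..<n} (\<lambda>_. MY))"
      by auto
    have e2: "{\<omega>\<in>space (PiM {..<n} (\<lambda>_. MY)). T d \<omega> \<ge> t} = T d -` {t..} \<inter> space (PiM {..<n} (\<lambda>_. MY))"
      by auto
    have e3: "{\<omega>\<in>space (PiM {..<n} (\<lambda>_. MY)). T d \<omega> \<le> t} = T d -` {..t} \<inter> space (PiM {..<n} (\<lambda>_. MY))"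
      by auto
    show "{\<omega>\<in>space (PiM {..<n} (\<lambda>_. MY)). T d \<omega> < t} \<in> sets (PiM {..<n} (\<lambda>_. MY))"
      unfolding e1 by (rule measurable_sets[OF Tm]) simp
    show "{\<omega>\<in>space (PiM {..<n} (\<lambda>_. MY)). T d \<omega> \<ge> t} \<in> sets (PiM {..<n} (\<lambda>_. MY))"
      unfolding e2 by (rule measurable_sets[OF Tm]) simp
    show "{\<omega>\<in>space (PiM {..<n} (\<lambda>_. MY)). T d \<omega> \<le> t} \<in> sets (PiM {..<n} (\<lambda>_. MY))"
      unfolding e3 by (rule measurable_sets[OF Tm]) simp
  qed
  have gb: "\<bar>1 - 2 * q d i\<bar> \<le> 1" if "d \<in> {..<n} \<rightarrow>\<^sub>E {..<M}" "i < n" for d i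
    using qin[OF that] ab by auto
  have rb: "q d i \<in> {0..1}" if "d \<in> {..<n} \<rightarrow>\<^sub>E {..<M}" "i < n" for d i
    using qin[OF that] ab by auto
  let ?P = "PiM {..<n} (\<lambda>i. W (\<xi> (q c i)))"
  interpret P: prob_space ?P by (rule prob_space_PiM) (use Pprop[OF c] in auto)
  have H1: "measure ?P {\<omega>\<in>space ?P. (\<Sum>i<n. (1 - 2*q c i) * (indicator A (\<omega> i) - q c i))
        \<ge> (\<Sum>i<n. (1 - 2*q c i) * (measure (W (\<xi> (q c i))) A - q c i)) + \<theta>} \<le> exp (-2*\<theta>\<^sup>2/(4*real n))"
    by (rule hoeff_prod(1)[where MY=MY]) (use n Pprop[OF c] A gb[OF c] rb[OF c] th in auto)
  have z: "(\<Sum>i<n. (1 - 2*q c i) * (measure (W (\<xi> (q c i))) A - q c i)) = 0"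
    by (rule sum.neutral) (use Pprop[OF c] in auto)
  have "space ?P - {\<omega>\<in>space (PiM {..<n} (\<lambda>_. MY)). T c \<omega> < \<theta>} =
        {\<omega>\<in>space ?P. (\<Sum>i<n. (1 - 2*q c i) * (indicator A (\<omega> i) - q c i)) \<ge> 0 + \<theta>}"
    unfolding space_eq[OF c] T_def by auto
  then have "measure ?P (space ?P - {\<omega>\<in>space (PiM {..<n} (\<lambda>_. MY)). T c \<omega> < \<theta>}) \<le> exp (-2*\<theta>\<^sup>2/(4*real n))"
    using H1 unfolding z by simp
  moreover have "measure ?P (space ?P - {\<omega>\<in>space (PiM {..<n} (\<lambda>_. MY)). T c \<omega> < \<theta>}) =
      1 - measure ?P {\<omega>\<in>space (PiM {..<n} (\<lambda>_. MY)). T c \<omega> < \<theta>}"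
    by (rule P.prob_compl) (use Em(1) sets_eq[OF c] in auto)
  ultimately show "measure ?P {\<omega>\<in>space (PiM {..<n} (\<lambda>_. MY)). T c \<omega> < \<theta>} \<ge> 1 - exp (-2*\<theta>\<^sup>2/(4*real n))"
    by simp
next
  assume neq: "c \<noteq> c'" and Rd: "R \<le> card {i\<in>{..<n}. c i \<noteq> c' i}"
    and s1: "(\<Sum>i<n. c i) = (\<Sum>i<n. c' i)" and s2: "(\<Sum>i<n. c i ^ 2) = (\<Sum>i<n. c' i ^ 2)"
    and tR: "2*\<theta> \<le> R*((b-a)/M)\<^sup>2"
  have qin: "q d i \<in> {a..b}" if "d \<in> {..<n} \<rightarrow>\<^sub>E {..<M}" "i < n" for d i
  proof -
    have "d i < M" using that by auto
    then have "real (d i) \<le> real M" by simp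
    then have "(b-a)/M * real (d i) \<le> (b-a)/M * real M" using ab by (intro mult_left_mono) auto
    also have "\<dots> = b - a" using M by simp
    finally show ?thesis unfolding q_def using ab by auto
  qed
  have Wps: "prob_space (W z) \<and> sets (W z) = sets MY" if "z \<in> space MX" for z
    using measurable_space[OF ch[unfolded channel_def] that] by (auto simp: space_prob_algebra)
  have Pprop: "prob_space (W (\<xi> (q d i))) \<and> sets (W (\<xi> (q d i))) = sets MY \<and> measure (W (\<xi> (q d i))) A = q d i"
    if "d \<in> {..<n} \<rightarrow>\<^sub>E {..<M}" "i < n" for d i
    using Wps xi qin[OF that] by blast
  have sets_eq: "sets (PiM {..<n} (\<lambda>i. W (\<xi> (q d i)))) = sets (PiM {..<n} (\<lambda>_. MY))"
    if "d \<in> {..<n} \<rightarrow>\<^sub>E {..<M}" for d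
    by (rule sets_PiM_cong) (use Pprop[OF that] in auto)
  have space_eq: "space (PiM {..<n} (\<lambda>i. W (\<xi> (q d i)))) = space (PiM {..<n} (\<lambda>_. MY))"
    if "d \<in> {..<n} \<rightarrow>\<^sub>E {..<M}" for d
    using sets_eq_imp_space_eq[OF sets_eq[OF that]] .
  have Tm: "T d \<in> borel_measurable (PiM {..<n} (\<lambda>_. MY))" for d
    unfolding T_def using A by measurable
  have Em: "{\<omega>\<in>space (PiM {..<n} (\<lambda>_. MY)). T d \<omega> \<le> t} \<in> sets (PiM {..<n} (\<lambda>_. MY))"
     for d t
  proof -
    have e3: "{\<omega>\<in>space (PiM {..<n} (\<lambda>_. MY)). T d \<omega> \<le> t} = T d -` {..t} \<inter> space (PiM {..<n} (\<lambda>_. MY))"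
      by auto
    show ?thesis unfolding e3 by (rule measurable_sets[OF Tm]) simp
  qed
  have gb: "\<bar>1 - 2 * q d i\<bar> \<le> 1" if "d \<in> {..<n} \<rightarrow>\<^sub>E {..<M}" "i < n" for d i
    using qin[OF that] ab by auto
  have rb: "q d i \<in> {0..1}" if "d \<in> {..<n} \<rightarrow>\<^sub>E {..<M}" "i < n" for d i
    using qin[OF that] ab by auto
  let ?P = "PiM {..<n} (\<lambda>i. W (\<xi> (q c' i)))"
  interpret P: prob_space ?P by (rule prob_space_PiM) (use Pprop[OF c'] in auto)
  define \<mu> where "\<mu> = (\<Sum>i<n. (1 - 2*q c i) * (measure (W (\<xi> (q c' i))) A - q c i))"
  have H2: "measure ?P {\<omega>\<in>space ?P. (\<Sum>i<n. (1 - 2*q c i) * (indicator A (\<omega> i) - q c i))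
        \<le> \<mu> - \<theta>} \<le> exp (-2*\<theta>\<^sup>2/(4*real n))"
    unfolding \<mu>_def
    by (rule hoeff_prod(2)[where MY=MY]) (use n Pprop[OF c'] A gb[OF c] rb[OF c] th in auto)
  define h where "h = (b-a)/M"
  have mu1: "\<mu> = (\<Sum>i<n. (1 - 2*q c i) * (q c' i - q c i))"
    unfolding \<mu>_def by (rule sum.cong) (use Pprop[OF c'] in auto)
  have S1: "(\<Sum>i<n. q c' i) = (\<Sum>i<n. q c i)"
  proof -
    have "(\<Sum>i<n. q d i) = n * a + h * real (\<Sum>i<n. d i)" for d
      unfolding q_def h_def by (simp add: sum.distrib sum_distrib_left)
    moreover have "(\<Sum>i<n. real (c i)) = (\<Sum>i<n. real (c' i))" using s1 by (metis of_nat_sum)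
    ultimately show ?thesis by simp
  qed
  have S2: "(\<Sum>i<n. (q c' i)^2) = (\<Sum>i<n. (q c i)^2)"
  proof -
    have "(\<Sum>i<n. (q d i)^2) = n * a^2 + 2*a*h * real (\<Sum>i<n. d i) + h^2 * real (\<Sum>i<n. d i ^ 2)" for d
      unfolding q_def h_def[symmetric]
      by (simp add: power2_eq_square algebra_simps sum.distrib sum_distrib_left)
    moreover have "(\<Sum>i<n. real (c i)) = (\<Sum>i<n. real (c' i))" using s1 by (metis of_nat_sum)
    moreover have "(\<Sum>i<n. real (c i ^ 2)) = (\<Sum>i<n. real (c' i ^ 2))" using s2 by (metis of_nat_sum)
    ultimately show ?thesis by simp
  qed
  have mu2: "\<mu> = (\<Sum>i<n. (q c' i - q c i)^2)"
  proof -
    have "\<mu> - (\<Sum>i<n. (q c' i - q c i)^2) = (\<Sum>i<n. (q c' i - q c i) - ((q c' i)^2 - (q c i)^2))"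
      unfolding mu1 sum_subtractf[symmetric]
      by (rule sum.cong) (auto simp: power2_eq_square algebra_simps)
    also have "\<dots> = 0" using S1 S2 by (simp add: sum_subtractf)
    finally show ?thesis by simp
  qed
  define D where "D = {i\<in>{..<n}. c i \<noteq> c' i}"
  have "real R * h^2 \<le> card D * h^2" using Rd unfolding D_def by (intro mult_right_mono) auto
  also have "\<dots> = (\<Sum>i\<in>D. h^2)" by simp
  also have "\<dots> \<le> (\<Sum>i\<in>D. (q c' i - q c i)^2)"
  proof (intro sum_mono)
    fix i assume "i \<in> D"
    then have "c i \<noteq> c' i" unfolding D_def by auto
    then have "1 \<le> \<bar>real (c' i) - real (c i)\<bar>" by linarith
    then have "1 \<le> (real (c' i) - real (c i))^2"
      by (metis abs_ge_self le_less_trans linorder_not_less one_le_power power2_abs)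
    moreover have "(q c' i - q c i)^2 = h^2 * (real (c' i) - real (c i))^2"
    proof -
      have "q c' i - q c i = h * (real (c' i) - real (c i))" unfolding q_def h_def by (simp add: algebra_simps)
      then show ?thesis by (simp add: power_mult_distrib)
    qed
    ultimately show "h^2 \<le> (q c' i - q c i)^2"
      by (metis mult.right_neutral mult_left_mono zero_le_power2)
  qed
  also have "\<dots> \<le> (\<Sum>i<n. (q c' i - q c i)^2)"
    by (rule sum_mono2) (auto simp: D_def)
  finally have "2*\<theta> \<le> \<mu>" using tR unfolding mu2 h_def by simp
  then have sub: "{\<omega>\<in>space (PiM {..<n} (\<lambda>_. MY)). T c \<omega> < \<theta>} \<subseteq>
      {\<omega>\<in>space ?P. (\<Sum>i<n. (1 - 2*q c i) * (indicator A (\<omega> i) - q c i)) \<le> \<mu> - \<theta>}"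
    unfolding space_eq[OF c'] T_def by auto
  have "measure ?P {\<omega>\<in>space (PiM {..<n} (\<lambda>_. MY)). T c \<omega> < \<theta>} \<le>
      measure ?P {\<omega>\<in>space ?P. (\<Sum>i<n. (1 - 2*q c i) * (indicator A (\<omega> i) - q c i)) \<le> \<mu> - \<theta>}"
    by (rule P.finite_measure_mono[OF sub])
       (use Em[of c "\<mu> - \<theta>"] sets_eq[OF c'] space_eq[OF c'] in \<open>simp add: T_def\<close>)
  then show "measure ?P {\<omega>\<in>space (PiM {..<n} (\<lambda>_. MY)). T c \<omega> < \<theta>} \<le> exp (-2*\<theta>\<^sup>2/(4*real n))"
    using H2 by linarith
qed



lemma di_code_big:
  fixes W :: "'a \<Rightarrow> 'b measure" and \<xi> :: "real \<Rightarrow> 'a"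
  assumes ch: "channel MX MY W"
    and xi: "\<And>p. p \<in> {a..b} \<Longrightarrow> \<xi> p \<in> space MX \<and> measure (W (\<xi> p)) A = p"
    and A: "A \<in> sets MY" and ab: "0 \<le> a" "a < b" "b \<le> 1" and n: "n \<ge> 1" and M: "M \<ge> 1"
    and R: "R \<ge> 1" and th: "\<theta> \<ge> 0" and tR: "2*\<theta> \<le> R*((b-a)/M)\<^sup>2"
    and l1: "exp (-2*\<theta>\<^sup>2/(4*real n)) \<le> l1" and l2: "exp (-2*\<theta>\<^sup>2/(4*real n)) \<le> l2"
  shows "\<exists>N. M ^ n \<le> ((n*M+1)*(n*M*M+1)) * (R*n^R*M^R) * N \<and> enat N \<le> N_DI MX MY W n l1 l2"
proof -
  obtain C where C: "C \<subseteq> {..<n} \<rightarrow>\<^sub>E {..<M}"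
     "M ^ n \<le> ((n*M+1)*(n*M*M+1)) * (R*n^R*M^R) * card C"
     "\<forall>c\<in>C. \<forall>c'\<in>C. c \<noteq> c' \<longrightarrow> R \<le> card {i\<in>{..<n}. c i \<noteq> c' i}"
     "\<forall>c\<in>C. \<forall>c'\<in>C. (\<Sum>i<n. c i) = (\<Sum>i<n. c' i) \<and> (\<Sum>i<n. c i ^ 2) = (\<Sum>i<n. c' i ^ 2)"
    using code_exists[OF n M R] by blast
  have fC: "finite C" using C(1) finite_subset by (blast intro: finite_PiE)
  obtain enum where en: "bij_betw enum {0..<card C} C" using ex_bij_betw_nat_finite[OF fC] by blast
  define N where "N = card C"
  have enC: "enum j \<in> C" if "j < N" for j using en that unfolding N_def bij_betw_def by auto
  have eninj: "enum j \<noteq> enum k" if "j < N" "k < N" "j \<noteq> k" for j k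
    using en that unfolding N_def bij_betw_def inj_on_def by auto
  define q where "q = (\<lambda>(c::nat\<Rightarrow>nat) i. a + (b-a)/M * real (c i))"
  define T where "T = (\<lambda>c \<omega>. (\<Sum>i<n. (1 - 2*q c i) * (indicator A (\<omega> i) - q c i)))"
  define u where "u j = (\<lambda>i\<in>{..<n}. \<xi> (q (enum j) i))" for j
  define E where "E j = {\<omega>\<in>space (PiM {..<n} (\<lambda>_. MY)). T (enum j) \<omega> < \<theta>}" for j
  have qin: "q d i \<in> {a..b}" if "d \<in> {..<n} \<rightarrow>\<^sub>E {..<M}" "i < n" for d i
  proof -
    have "d i < M" using that by auto
    then have "real (d i) \<le> real M" by simp
    then have "(b-a)/M * real (d i) \<le> (b-a)/M * real M" using ab by (intro mult_left_mono) auto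
    also have "\<dots> = b - a" using M by simp
    finally show ?thesis unfolding q_def using ab by auto
  qed
  have Tm: "T d \<in> borel_measurable (PiM {..<n} (\<lambda>_. MY))" for d
    unfolding T_def using A by measurable
  have Em: "E j \<in> sets (PiM {..<n} (\<lambda>_. MY))" for j
  proof -
    have e1: "E j = T (enum j) -` {..<\<theta>} \<inter> space (PiM {..<n} (\<lambda>_. MY))"
      unfolding E_def by auto
    show ?thesis unfolding e1 by (rule measurable_sets[OF Tm]) simp
  qed
  have po: "prod_out W n (u j) = PiM {..<n} (\<lambda>i. W (\<xi> (q (enum j) i)))" for j
    unfolding prod_out_def u_def by (rule PiM_cong) auto
  have cb1: "measure (prod_out W n (u j)) (E j) \<ge> 1 - l1" if "j < N" for j
  proof -
    have "1 - l1 \<le> 1 - exp (-2*\<theta>\<^sup>2/(4*real n))" using l1 by simp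
    also have "\<dots> \<le> measure (prod_out W n (u j)) (E j)"
      unfolding po E_def T_def q_def
      by (rule code_bounds(1)[OF ch xi A ab n M _ _ th]) (use enC[OF that] C(1) in auto)
    finally show ?thesis .
  qed
  have cb2: "measure (prod_out W n (u j)) (E k) \<le> l2" if "j < N" "k < N" "j \<noteq> k" for j k
  proof -
    have "measure (prod_out W n (u j)) (E k) \<le> exp (-2*\<theta>\<^sup>2/(4*real n))"
    proof -
      have kk: "enum k \<in> {..<n} \<rightarrow>\<^sub>E {..<M}" "enum j \<in> {..<n} \<rightarrow>\<^sub>E {..<M}"
        using enC[OF that(1)] enC[OF that(2)] C(1) by auto
      have ne: "enum k \<noteq> enum j" using eninj[OF that] by simp
      have dd: "R \<le> card {i\<in>{..<n}. enum k i \<noteq> enum j i}"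
        using C(3) enC[OF that(1)] enC[OF that(2)] ne by blast
      have ss: "(\<Sum>i<n. enum k i) = (\<Sum>i<n. enum j i)" "(\<Sum>i<n. enum k i ^ 2) = (\<Sum>i<n. enum j i ^ 2)"
        using C(4) enC[OF that(1)] enC[OF that(2)] by blast+
      show ?thesis unfolding po E_def T_def q_def
        by (rule code_bounds(2)[OF ch xi A ab n M kk th ne dd ss tR])
    qed
    then show ?thesis using l2 by simp
  qed
  have uin: "u j \<in> {..<n} \<rightarrow>\<^sub>E space MX" if "j < N" for j
    unfolding u_def using xi qin enC[OF that] C(1) by auto
  have "DI_code MX MY W n N l1 l2 u E"
    unfolding DI_code_def using uin Em cb1 cb2 by blast
  then have "enat N \<le> N_DI MX MY W n l1 l2"
    unfolding N_DI_def by (intro Sup_upper) blast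
  then show ?thesis using C(2) unfolding N_def by blast
qed



lemma curve_setup:
  fixes MX :: "'a measure" and MY :: "'b measure" and W :: "'a \<Rightarrow> 'b measure"
    and x :: "real \<Rightarrow> 'a"
  assumes ch: "channel MX MY W"
    and xs: "\<forall>t\<in>{0..1}. x t \<in> space MX"
    and ct: "\<forall>t\<in>{0..1}. \<forall>\<epsilon>>0. \<exists>\<delta>>0. \<forall>s\<in>{0..1}.
           \<bar>s - t\<bar> < \<delta> \<longrightarrow> tv_dist MY (W (x s)) (W (x t)) < \<epsilon>"
    and ne: "W (x 0) \<noteq> W (x 1)"
  shows "\<exists>A a b \<xi>. A \<in> sets MY \<and> 0 \<le> a \<and> a < b \<and> b \<le> 1 \<and>
           (\<forall>p\<in>{a..b}. \<xi> p \<in> space MX \<and> measure (W (\<xi> p)) A = p)"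
proof -
  have Wps: "prob_space (W (x t)) \<and> sets (W (x t)) = sets MY" if "t \<in> {0..1}" for t
    using measurable_space[OF ch[unfolded channel_def] xs[rule_format, OF that]]
    by (auto simp: space_prob_algebra)
  have "\<exists>A\<in>sets MY. measure (W (x 0)) A \<noteq> measure (W (x 1)) A"
  proof (rule ccontr)
    assume "\<not> ?thesis"
    then have eq: "\<And>A. A \<in> sets MY \<Longrightarrow> measure (W (x 0)) A = measure (W (x 1)) A" by blast
    have p0: "prob_space (W (x 0))" and p1: "prob_space (W (x 1))"
      and s0: "sets (W (x 0)) = sets MY" and s1: "sets (W (x 1)) = sets MY" using Wps by auto
    have "W (x 0) = W (x 1)"
    proof (rule measure_eqI)
      show "sets (W (x 0)) = sets (W (x 1))" using s0 s1 by simp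
      fix B assume "B \<in> sets (W (x 0))"
      interpret P0: prob_space "W (x 0)" by (rule p0)
      interpret P1: prob_space "W (x 1)" by (rule p1)
      from \<open>B \<in> sets (W (x 0))\<close> show "emeasure (W (x 0)) B = emeasure (W (x 1)) B"
        using eq[of B] s0 P0.emeasure_eq_measure P1.emeasure_eq_measure
        by simp
    qed
    then show False using ne by simp
  qed
  then obtain A where A: "A \<in> sets MY" "measure (W (x 0)) A \<noteq> measure (W (x 1)) A" by blast
  define f where "f t = measure (W (x t)) A" for t
  have fb: "0 \<le> f t \<and> f t \<le> 1" if "t \<in> {0..1}" for t
    using Wps[OF that] prob_space.prob_le_1 unfolding f_def by (auto simp: measure_nonneg)
  have diff: "\<bar>f s - f t\<bar> \<le> tv_dist MY (W (x s)) (W (x t))" if "s \<in> {0..1}" "t \<in> {0..1}" for s t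
    unfolding tv_dist_def f_def
  proof (rule cSUP_upper[OF A(1)])
    show "bdd_above ((\<lambda>B. \<bar>measure (W (x s)) B - measure (W (x t)) B\<bar>) ` sets MY)"
    proof (rule bdd_aboveI)
      fix z assume "z \<in> (\<lambda>B. \<bar>measure (W (x s)) B - measure (W (x t)) B\<bar>) ` sets MY"
      then obtain B where z: "z = \<bar>measure (W (x s)) B - measure (W (x t)) B\<bar>" by blast
      have "measure (W (x s)) B \<le> 1" "measure (W (x t)) B \<le> 1"
        using Wps that prob_space.prob_le_1 by blast+
      moreover have "0 \<le> measure (W (x s)) B" "0 \<le> measure (W (x t)) B" by (simp_all add: measure_nonneg)
      ultimately show "z \<le> 1" unfolding z by linarith
    qed
  qed
  have cont: "continuous_on {0..1} f"
    unfolding continuous_on_iff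
  proof (intro ballI allI impI)
    fix t :: real and e :: real assume t: "t \<in> {0..1}" and e: "e > 0"
    obtain d where d: "d > 0" "\<forall>s\<in>{0..1}. \<bar>s - t\<bar> < d \<longrightarrow> tv_dist MY (W (x s)) (W (x t)) < e"
      using ct t e by blast
    show "\<exists>d>0. \<forall>s\<in>{0..1}. dist s t < d \<longrightarrow> dist (f s) (f t) < e"
    proof (intro exI[of _ d] conjI ballI impI)
      fix s assume s: "s \<in> {0..1}" "dist s t < d"
      have "dist (f s) (f t) \<le> tv_dist MY (W (x s)) (W (x t))"
        using diff[OF s(1) t] by (simp add: dist_real_def)
      also have "\<dots> < e" using d s by (auto simp: dist_real_def)
      finally show "dist (f s) (f t) < e" .
    qed (use d in auto)
  qed
  define a where "a = min (f 0) (f 1)"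
  define b where "b = max (f 0) (f 1)"
  have ab: "0 \<le> a" "a < b" "b \<le> 1"
    using fb[of 0] fb[of 1] A(2) unfolding a_def b_def f_def by auto
  have ivt: "\<exists>t. t \<in> {0..1} \<and> f t = p" if "p \<in> {a..b}" for p
  proof (cases "f 0 \<le> f 1")
    case True
    then show ?thesis using IVT'[of f 0 p 1, OF _ _ _ cont] that unfolding a_def b_def by auto
  next
    case False
    then show ?thesis using IVT2'[of f 1 p 0, OF _ _ _ cont] that unfolding a_def b_def by auto
  qed
  define \<xi> where "\<xi> p = x (SOME t. t \<in> {0..1} \<and> f t = p)" for p
  have "\<forall>p\<in>{a..b}. \<xi> p \<in> space MX \<and> measure (W (\<xi> p)) A = p"
  proof
    fix p assume "p \<in> {a..b}"
    from someI_ex[OF ivt[OF this]] have "(SOME t. t \<in> {0..1} \<and> f t = p) \<in> {0..1}"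
      "f (SOME t. t \<in> {0..1} \<and> f t = p) = p" by auto
    then show "\<xi> p \<in> space MX \<and> measure (W (\<xi> p)) A = p"
      unfolding \<xi>_def using xs unfolding f_def by auto
  qed
  then show ?thesis using A(1) ab by blast
qed



lemma asymp_main:
  fixes W :: "'a \<Rightarrow> 'b measure" and \<xi> :: "real \<Rightarrow> 'a"
  assumes ch: "channel MX MY W"
    and xi: "\<And>p. p \<in> {a..b} \<Longrightarrow> \<xi> p \<in> space MX \<and> measure (W (\<xi> p)) A = p"
    and A: "A \<in> sets MY" and ab: "0 \<le> a" "a < b" "b \<le> 1"
    and l1: "l1 > 0" and l2: "l2 > 0" and r: "r < 1/4"
  shows "eventually (\<lambda>n. ereal r < DI_rate MX MY W n l1 l2) sequentially"
proof -
  define e where "e = min (1/8) ((1/4 - r)/2)"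
  have m1: "e \<le> (1/4 - r)/2" "e \<le> 1/8" "e = 1/8 \<or> e = (1/4-r)/2"
    unfolding e_def by (rule min.cobounded2, rule min.cobounded1, metis min_def)
  have e1: "0 < e" using m1 r by auto
  have e2: "e < 1/4" using m1 r by auto
  have e3: "r < 1/4 - e" using m1 r by auto
  note e = e1 e2 e3
  define hf where "hf n = (real n * log 2 (real n powr (1/4 - e) - 1) - log 2 ((real n^2+1)*(real n^3+1))
      - log 2 (real n powr (1-e) + 1) - 2*(real n powr (1-e)+1)*log 2 (real n))/(real n*log 2 (real n))" for n :: nat
  have L1: "hf \<longlonglongrightarrow> 1/4 - e" unfolding hf_def using e by real_asymp
  have ev1: "eventually (\<lambda>n. r < hf n) sequentially" by (rule order_tendstoD(1)[OF L1 e(3)])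
  define d where "d = b - a"
  have d: "d > 0" using ab unfolding d_def by simp
  define g where "g n = exp (-2*((d^2 * real n powr (1/2+e)/2)^2)/(4*real n))" for n :: nat
  have L2: "g \<longlonglongrightarrow> 0" unfolding g_def using e d by real_asymp
  have ev2: "eventually (\<lambda>n. g n < min l1 l2) sequentially"
    by (rule order_tendstoD(2)[OF L2]) (use l1 l2 in simp)
  have L3: "filterlim (\<lambda>n::nat. real n powr (1/4-e)) at_top sequentially" using e by real_asymp
  have ev3: "eventually (\<lambda>n. 3 \<le> real n powr (1/4-e)) sequentially"
    using L3 unfolding filterlim_at_top by blast
  have ev4: "eventually (\<lambda>n::nat. 2 \<le> n) sequentially" by (rule eventually_ge_at_top)
  show ?thesis
  proof (rule eventually_mono[OF eventually_conj[OF ev1 eventually_conj[OF ev2 eventually_conj[OF ev3 ev4]]]])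
    fix n :: nat assume H: "r < hf n \<and> g n < min l1 l2 \<and> 3 \<le> real n powr (1/4-e) \<and> 2 \<le> n"
    have n2: "2 \<le> n" and n1: "1 \<le> n" using H by auto
    have rn: "real n \<ge> 2" using n2 by simp
    define Mr where "Mr = real n powr (1/4 - e)"
    define M where "M = nat \<lfloor>Mr\<rfloor>"
    have Mr3: "3 \<le> Mr" using H unfolding Mr_def by simp
    have MleMr: "real M \<le> Mr" unfolding M_def using Mr3 by simp
    have MgtMr: "Mr - 1 < real M" unfolding M_def using Mr3 by linarith
    have M1: "M \<ge> 1" using MgtMr Mr3 by linarith
    have Mrn: "Mr \<le> real n" unfolding Mr_def
      using powr_mono[of "1/4 - e" 1 "real n"] e rn by simp
    have Mn: "M \<le> n" using MleMr Mrn by linarith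
    define Rr where "Rr = real n powr (1 - e)"
    define R where "R = nat \<lceil>Rr\<rceil>"
    have Rr0: "0 < Rr" unfolding Rr_def using rn by simp
    have RgeRr: "Rr \<le> real R" unfolding R_def by linarith
    have RltRr: "real R < Rr + 1" unfolding R_def using Rr0 by linarith
    have R1: "R \<ge> 1" using RgeRr Rr0 by linarith
    define \<theta> where "\<theta> = d^2 * real n powr (1/2+e) / 2"
    have th: "\<theta> \<ge> 0" unfolding \<theta>_def by simp
    have tR: "2*\<theta> \<le> R*((b-a)/M)\<^sup>2"
    proof -
      have "Mr * Mr = real n powr (1/2 - 2*e)" unfolding Mr_def
        by (simp add: powr_add[symmetric])
      then have "Rr / (Mr * Mr) = real n powr (1/2 + e)" unfolding Rr_def
        by (simp add: powr_diff[symmetric])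
      then have "2*\<theta> = d^2 * (Rr / (Mr * Mr))" unfolding \<theta>_def by simp
      also have "\<dots> = d^2 * Rr / (Mr * Mr)" by simp
      also have "\<dots> \<le> d^2 * real R / (Mr * Mr)"
        using RgeRr Mr3 by (intro divide_right_mono mult_left_mono) auto
      also have "\<dots> \<le> d^2 * real R / (real M * real M)"
        using MleMr M1 by (intro divide_left_mono mult_mono mult_pos_pos) auto
      also have "\<dots> = R*((b-a)/M)\<^sup>2" unfolding d_def by (simp add: power2_eq_square)
      finally show ?thesis .
    qed
    have gn: "exp (-2*\<theta>\<^sup>2/(4*real n)) = g n" unfolding g_def \<theta>_def by simp
    have el1: "exp (-2*\<theta>\<^sup>2/(4*real n)) \<le> l1" and el2: "exp (-2*\<theta>\<^sup>2/(4*real n)) \<le> l2"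
      using H gn by auto
    obtain N where N: "M ^ n \<le> ((n*M+1)*(n*M*M+1)) * (R*n^R*M^R) * N"
        "enat N \<le> N_DI MX MY W n l1 l2"
      using di_code_big[OF ch xi A ab n1 M1 R1 th tR el1 el2] by blast
    define K where "K = (n*M+1)*(n*M*M+1)"
    define B where "B = R*n^R*M^R"
    have Kp: "K > 0" and Bp: "B > 0" unfolding K_def B_def using M1 R1 n1 by auto
    have Np: "N > 0"
    proof (rule ccontr)
      assume "\<not> N > 0" then have "N = 0" by simp
      then show False using N(1) M1 by simp
    qed
    have real_ineq: "real M ^ n \<le> real K * real B * real N"
      using N(1) unfolding K_def B_def by (metis of_nat_le_iff of_nat_mult of_nat_power)
    have lg: "real n * log 2 (real M) \<le> log 2 (real K) + log 2 (real B) + log 2 (real N)"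
    proof -
      have "real n * log 2 (real M) = log 2 (real M ^ n)" using M1 by (simp add: log_nat_power)
      also have "\<dots> \<le> log 2 (real K * real B * real N)"
        using real_ineq M1 by (intro log_mono) auto
      also have "\<dots> = log 2 (real K) + log 2 (real B) + log 2 (real N)"
        using Kp Bp Np by (simp add: log_mult)
      finally show ?thesis .
    qed
    have lM: "log 2 (Mr - 1) \<le> log 2 (real M)" using MgtMr Mr3 by (intro log_mono) auto
    have lMn: "log 2 (real M) \<le> log 2 (real n)" using Mn M1 by (intro log_mono) auto
    have lM0: "0 \<le> log 2 (real M)" using M1 by simp
    have lK: "log 2 (real K) \<le> log 2 ((real n^2+1)*(real n^3+1))"
    proof (intro log_mono)
      show "0 < real K" using Kp by simp
      have a1: "real n * real M + 1 \<le> real n^2 + 1" using Mn by (simp add: power2_eq_square mult_left_mono)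
      have a2: "real n * real M * real M + 1 \<le> real n^3 + 1"
      proof -
        have "real n * real M * real M \<le> real n * real n * real n"
          using Mn by (intro mult_mono) auto
        then show ?thesis by (simp add: power3_eq_cube)
      qed
      have kk: "real K = (real n * real M + 1) * (real n * real M * real M + 1)"
        unfolding K_def by (simp only: of_nat_mult of_nat_add of_nat_1)
      show "real K \<le> (real n^2+1)*(real n^3+1)" unfolding kk
        by (rule mult_mono[OF a1 a2]) auto
    qed simp
    have lB: "log 2 (real B) \<le> log 2 (Rr + 1) + 2*(Rr+1)*log 2 (real n)"
    proof -
      have "log 2 (real B) = log 2 (real R) + real R * log 2 (real n) + real R * log 2 (real M)"
        unfolding B_def using R1 M1 n1 by (simp add: log_mult log_nat_power)
      also have "\<dots> \<le> log 2 (Rr + 1) + (Rr+1) * log 2 (real n) + (Rr+1) * log 2 (real n)"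
      proof -
        have "log 2 (real R) \<le> log 2 (Rr + 1)" using RltRr R1 by (intro log_mono) auto
        moreover have "real R * log 2 (real n) \<le> (Rr+1) * log 2 (real n)"
          using RltRr n1 by (intro mult_right_mono) auto
        moreover have "real R * log 2 (real M) \<le> (Rr+1) * log 2 (real n)"
          using RltRr lMn lM0 by (intro mult_mono) auto
        ultimately show ?thesis by linarith
      qed
      finally show ?thesis by (simp add: algebra_simps)
    qed
    have num: "real n * log 2 (Mr - 1) - log 2 ((real n^2+1)*(real n^3+1))
      - log 2 (Rr + 1) - 2*(Rr+1)*log 2 (real n) \<le> log 2 (real N)"
    proof -
      have "real n * log 2 (Mr - 1) \<le> real n * log 2 (real M)" using lM by (intro mult_left_mono) auto
      then show ?thesis using lg lK lB by linarith
    qed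
    have den: "0 < real n * log 2 (real n)" using rn by simp
    have hle: "hf n \<le> log 2 (real N) / (real n * log 2 (real n))"
      unfolding hf_def Mr_def[symmetric] Rr_def[symmetric]
      by (rule divide_right_mono[OF num]) (use den in simp)
    show "ereal r < DI_rate MX MY W n l1 l2"
    proof (cases "N_DI MX MY W n l1 l2")
      case (enat N')
      then have NN: "N \<le> N'" using N(2) by simp
      have "log 2 (real N) \<le> log 2 (real N')" using NN Np by (intro log_mono) auto
      then have "log 2 (real N) / (real n * log 2 (real n)) \<le> log 2 (real N') / (real n * log 2 (real n))"
        using den by (intro divide_right_mono) auto
      then have "r < log 2 (real N') / (real n * log 2 (real n))" using H hle by linarith
      then show ?thesis unfolding DI_rate_def enat by simp
    next
      case infinity
      then show ?thesis unfolding DI_rate_def by simp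
    qed
  qed
qed


theorem corollary2:
  fixes MX :: "'a measure" and MY :: "'b measure" and W :: "'a \<Rightarrow> 'b measure"
    and x :: "real \<Rightarrow> 'a"
  assumes "channel MX MY W"
    and "\<forall>t\<in>{0..1}. x t \<in> space MX"
    and "\<forall>t\<in>{0..1}. \<forall>\<epsilon>>0. \<exists>\<delta>>0. \<forall>s\<in>{0..1}.
           \<bar>s - t\<bar> < \<delta> \<longrightarrow> tv_dist MY (W (x s)) (W (x t)) < \<epsilon>"
    and "W (x 0) \<noteq> W (x 1)"
  shows "C_DI_dot MX MY W \<ge> 1 / 4"
proof -
  obtain A a b \<xi> where S: "A \<in> sets MY" "0 \<le> a" "a < b" "b \<le> 1"
      "\<forall>p\<in>{a..b}. \<xi> p \<in> space MX \<and> measure (W (\<xi> p)) A = p"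
    using curve_setup[OF assms] by blast
  have xi: "\<And>p. p \<in> {a..b} \<Longrightarrow> \<xi> p \<in> space MX \<and> measure (W (\<xi> p)) A = p" using S(5) by blast
  show ?thesis unfolding C_DI_dot_def
  proof (rule INF_greatest)
    fix l assume "l \<in> {(l1, l2). (l1::real) > 0 \<and> (l2::real) > 0}"
    then obtain l1 l2 where l: "l = (l1,l2)" "l1 > 0" "l2 > 0" by auto
    show "1/4 \<le> liminf (\<lambda>n. DI_rate MX MY W n (fst l) (snd l))"
      unfolding le_Liminf_iff
    proof (intro allI impI)
      fix y :: ereal assume y: "y < 1/4"
      show "eventually (\<lambda>n. y < DI_rate MX MY W n (fst l) (snd l)) sequentially"
      proof (cases y)
        case (real r)
        have q: "(1/4::ereal) = ereal (1/4)" by (simp add: one_ereal_def)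
        have "r < 1/4" using y unfolding real q by simp
        then show ?thesis using asymp_main[OF assms(1) xi S(1-4) l(2,3)] l real by simp
      next
        case PInf then show ?thesis using y by simp
      next
        case MInf
        show ?thesis unfolding MInf
          by (intro always_eventually allI) (simp add: DI_rate_def split: enat.split)
      qed
    qed
  qed
qed

end
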